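(* For every $\alpha>1$, the Ces\`aro operator $C_1(f)(z)=\int_0^z\frac{f(w)}{w(1-w)}\,dw$ is a bounded linear operator from $(\mathcal{B}_\alpha^0,\|\cdot\|_{\mathcal{B}_\alpha})$ to itself.
   Context: $\mathbb{D}=\{z\in\mathbb{C}:|z|<1\}$. For $\alpha>0$, the $\alpha$-Bloch space $\mathcal{B}_\alpha$ is the space of analytic functions $f$ on $\mathbb{D}$ with $\|f\|_{\mathcal{B}_\alpha}:=\sup_{z\in\mathbb{D}}(1-|z|^2)^\alpha|f'(z)|<\infty$. $\mathcal{B}_\alpha^0=\{f\in\mathcal{B}_\alpha: f(0)=0\}$, normed by $\|\cdot\|_{\mathcal{B}_\alpha}$. *)

theory Defs
  imports "HOL-Complex_Analysis.Complex_Analysis"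
begin

definition in_bloch :: "real \<Rightarrow> (complex \<Rightarrow> complex) \<Rightarrow> bool" where
  "in_bloch \<alpha> f \<longleftrightarrow> f holomorphic_on ball 0 1 \<and>
     bdd_above ((\<lambda>z. (1 - (cmod z)\<^sup>2) powr \<alpha> * cmod (deriv f z)) ` ball 0 1)"

definition bloch_norm :: "real \<Rightarrow> (complex \<Rightarrow> complex) \<Rightarrow> real" where
  "bloch_norm \<alpha> f = (SUP z\<in>ball 0 1. (1 - (cmod z)\<^sup>2) powr \<alpha> * cmod (deriv f z))"

definition bloch0 :: "real \<Rightarrow> (complex \<Rightarrow> complex) set" where
  "bloch0 \<alpha> = {f. in_bloch \<alpha> f \<and> f 0 = 0}"

definition cesaro1 :: "(complex \<Rightarrow> complex) \<Rightarrow> complex \<Rightarrow> complex" where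
  "cesaro1 f z = contour_integral (linepath 0 z) (\<lambda>w. f w / (w * (1 - w)))"

end

theory Submission
  imports Defs
begin


lemma bnd_deriv:
  assumes "f \<in> bloch0 \<alpha>" "w \<in> ball 0 1"
  shows "(1 - (cmod w)^2) powr \<alpha> * cmod (deriv f w) \<le> bloch_norm \<alpha> f"
  using assms unfolding bloch0_def in_bloch_def bloch_norm_def by (auto intro!: cSUP_upper)

lemma N_nonneg:
  assumes "f \<in> bloch0 \<alpha>"
  shows "0 \<le> bloch_norm \<alpha> f"
proof -
  have "(1 - (cmod 0)^2) powr \<alpha> * cmod (deriv f 0) \<le> bloch_norm \<alpha> f"
    using bnd_deriv[OF assms, of 0] by simp
  moreover have "0 \<le> (1 - (cmod 0)^2) powr \<alpha> * cmod (deriv f 0)" by simp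
  ultimately show ?thesis by linarith
qed

lemma bnd_deriv':
  assumes "f \<in> bloch0 \<alpha>" "w \<in> ball 0 1"
  shows "cmod (deriv f w) \<le> bloch_norm \<alpha> f / (1 - (cmod w)^2) powr \<alpha>"
proof -
  have "cmod w < 1" using assms(2) by simp
  then have "(cmod w)^2 < 1" by (simp add: abs_square_less_1)
  then have p: "0 < (1 - (cmod w)^2) powr \<alpha>" by simp
  show ?thesis using bnd_deriv[OF assms] p by (simp add: pos_le_divide_eq mult.commute)
qed

lemma holo:
  assumes "f \<in> bloch0 \<alpha>"
  shows "f holomorphic_on ball 0 1" "f 0 = 0"
  using assms unfolding bloch0_def in_bloch_def by auto

lemma bnd_f1:
  assumes "f \<in> bloch0 \<alpha>" "z \<in> ball 0 1" "\<alpha> \<ge> 0"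
  shows "cmod (f z) \<le> bloch_norm \<alpha> f / (1 - (cmod z)^2) powr \<alpha> * cmod z"
proof -
  define r where "r = cmod z"
  have r1: "r < 1" using assms(2) by (simp add: r_def)
  have r0: "0 \<le> r" by (simp add: r_def)
  have S: "cball 0 r \<subseteq> ball 0 1" using r1 by auto
  have N0: "0 \<le> bloch_norm \<alpha> f" by (rule N_nonneg[OF assms(1)])
  have "norm (f z - f 0) \<le> (bloch_norm \<alpha> f / (1 - r^2) powr \<alpha>) * norm (z - 0)"
  proof (rule field_differentiable_bound[of "cball 0 r"])
    show "convex (cball (0::complex) r)" by simp
    fix w assume w: "w \<in> cball (0::complex) r"
    have wb: "w \<in> ball 0 1" using w r1 by auto
    show "(f has_field_derivative deriv f w) (at w within cball 0 r)"
      using holomorphic_derivI[OF holo(1)[OF assms(1)] _ wb] by simp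
    have wr: "cmod w \<le> r" using w by simp
    have "(cmod w)^2 \<le> r^2" using wr by (simp add: power_mono)
    moreover have "r^2 < 1" using r0 r1 by (simp add: abs_square_less_1)
    ultimately have "(1 - r^2) powr \<alpha> \<le> (1 - (cmod w)^2) powr \<alpha>" "0 < (1 - r^2) powr \<alpha>"
      using assms(3) by (auto intro!: powr_mono2)
    then have "bloch_norm \<alpha> f / (1 - (cmod w)^2) powr \<alpha> \<le> bloch_norm \<alpha> f / (1 - r^2) powr \<alpha>"
      using N0 by (intro divide_left_mono mult_pos_pos) auto
    then show "norm (deriv f w) \<le> bloch_norm \<alpha> f / (1 - r^2) powr \<alpha>"
      using bnd_deriv'[OF assms(1) wb] by simp
  qed (auto simp: r_def)
  then show ?thesis using holo(2)[OF assms(1)] by (simp add: r_def)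
qed

lemma bnd_f2:
  assumes "f \<in> bloch0 \<alpha>" "z \<in> ball 0 1" "\<alpha> > 1"
  shows "cmod (f z) \<le> bloch_norm \<alpha> f * (1 - cmod z) powr (1 - \<alpha>) / (\<alpha> - 1)"
proof (cases "z = 0")
  case True
  then show ?thesis using holo(2)[OF assms(1)] N_nonneg[OF assms(1)] assms(3) by simp
next
  case False
  define r where "r = cmod z"
  define N where "N = bloch_norm \<alpha> f"
  define u where "u = z / of_real r"
  have r1: "r < 1" using assms(2) by (simp add: r_def)
  have r0: "0 < r" using False by (simp add: r_def)
  have u1: "cmod u = 1" using r0 by (simp add: u_def r_def norm_divide)
  have zu: "z = of_real r * u" using r0 by (simp add: u_def)
  have N0: "0 \<le> N" unfolding N_def by (rule N_nonneg[OF assms(1)])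
  have hol: "f holomorphic_on ball 0 1" by (rule holo(1)[OF assms(1)])
  have inb: "of_real t * u \<in> ball 0 1" if "0 \<le> t" "t \<le> r" for t
    using that r1 u1 by (simp add: norm_mult)
  define F where "F = (\<lambda>t::real. f (of_real t * u))"
  define \<phi> where "\<phi> = (\<lambda>t::real. N * (1 - t) powr (1 - \<alpha>) / (\<alpha> - 1))"
  have "norm (F r - F 0) \<le> \<phi> r - \<phi> 0"
  proof (rule differentiable_bound_general[OF r0])
    show "continuous_on {0..r} F" unfolding F_def
      apply (rule continuous_on_compose2[OF holomorphic_on_imp_continuous_on[OF hol]])
      using inb by (auto intro!: continuous_intros)
    show "continuous_on {0..r} \<phi>" unfolding \<phi>_def using r1 assms(3)
      by (auto intro!: continuous_intros)
    fix x assume x: "0 < x" "x < r"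
    have xb: "of_real x * u \<in> ball 0 1" using inb x by auto
    show "(F has_vector_derivative (u * deriv f (of_real x * u))) (at x)"
    proof -
      have "((\<lambda>t::real. of_real t * u) has_vector_derivative u) (at x)"
        by (auto intro!: derivative_eq_intros simp: has_vector_derivative_def scaleR_conv_of_real)
      from field_vector_diff_chain_at[OF this holomorphic_derivI[OF hol _ xb]]
      show ?thesis by (simp add: F_def o_def)
    qed
    show "(\<phi> has_vector_derivative (N * (1 - x) powr (- \<alpha>))) (at x)"
    proof -
      have e: "- ((1 - \<alpha>) * P * N / (\<alpha> - 1)) = N * P" for P
      proof -
        have a: "\<alpha> - 1 \<noteq> 0" using assms(3) by simp
        have "(1 - \<alpha>) * P * N / (\<alpha> - 1) = - (P * N)" using a by (simp add: field_simps)
        then show ?thesis by simp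
      qed
      have "(\<phi> has_real_derivative (N * (1 - x) powr (- \<alpha>))) (at x)"
        unfolding \<phi>_def using x r1 assms(3)
        apply (auto intro!: derivative_eq_intros)
        using assms(3) apply (simp add: e)
        done
      then show ?thesis by (simp add: has_real_derivative_iff_has_vector_derivative)
    qed
    have "norm (deriv f (of_real x * u)) \<le> N / (1 - x^2) powr \<alpha>"
      using bnd_deriv'[OF assms(1) xb] x u1 by (simp add: N_def norm_mult)
    also have "\<dots> \<le> N / (1 - x) powr \<alpha>"
    proof -
      have "1 - x \<le> 1 - x^2" "0 < 1 - x" using x r1 by (auto simp: power2_eq_square mult_le_cancel_right1)
      then have "(1 - x) powr \<alpha> \<le> (1 - x^2) powr \<alpha>" "0 < (1 - x) powr \<alpha>"
        using assms(3) by (auto intro!: powr_mono2)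
      then show ?thesis using N0 by (intro divide_left_mono mult_pos_pos) auto
    qed
    also have "\<dots> = N * (1 - x) powr (- \<alpha>)" by (simp add: powr_minus divide_inverse)
    finally show "norm (u * deriv f (of_real x * u)) \<le> N * (1 - x) powr (- \<alpha>)"
      using u1 by (simp add: norm_mult)
  qed
  moreover have "F r = f z" "F 0 = 0" using zu holo(2)[OF assms(1)] by (auto simp: F_def)
  moreover have "\<phi> 0 \<ge> 0" using N0 assms(3) by (simp add: \<phi>_def)
  ultimately show ?thesis by (simp add: \<phi>_def N_def r_def)
qed

lemma bnd_main:
  assumes "f \<in> bloch0 \<alpha>" "z \<in> ball 0 1" "\<alpha> > 1" "z \<noteq> 0"
  shows "(1 - (cmod z)^2) powr \<alpha> * (cmod (f z) / (cmod z * cmod (1 - z)))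
          \<le> (2 + 2 * 2 powr \<alpha> / (\<alpha> - 1)) * bloch_norm \<alpha> f"
proof -
  define r where "r = cmod z"
  define N where "N = bloch_norm \<alpha> f"
  define A where "A = (1 - r^2) powr \<alpha>"
  define K where "K = cmod (f z)"
  have r1: "r < 1" using assms(2) by (simp add: r_def)
  have r0: "0 < r" using assms(4) by (simp add: r_def)
  have N0: "0 \<le> N" unfolding N_def by (rule N_nonneg[OF assms(1)])
  have d1: "1 - r \<le> cmod (1 - z)" using norm_triangle_ineq2[of 1 z] by (simp add: r_def)
  have "r^2 < 1" using r0 r1 by (simp add: abs_square_less_1)
  then have A0: "0 < A" by (simp add: A_def)
  have K0: "0 \<le> K" by (simp add: K_def)
  have cN: "0 \<le> 2 * 2 powr \<alpha> / (\<alpha> - 1) * N" using N0 assms(3) by simp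
  have "A * (K / (r * cmod (1 - z))) \<le> 2 * N + 2 * 2 powr \<alpha> / (\<alpha> - 1) * N"
  proof (cases "r \<le> 1/2")
    case True
    have "K \<le> N / A * r" using bnd_f1[OF assms(1,2)] assms(3) by (simp add: K_def N_def A_def r_def)
    then have AK: "A * K \<le> N * r" using A0 by (simp add: field_simps)
    have d: "1/2 \<le> cmod (1 - z)" using d1 True by linarith
    have "A * (K / (r * cmod (1 - z))) = (A * K) / r / cmod (1 - z)" by simp
    also have "\<dots> \<le> (N * r) / r / cmod (1 - z)" using AK r0 d by (intro divide_right_mono) auto
    also have "\<dots> = N / cmod (1 - z)" using r0 by simp
    also have "\<dots> \<le> N / (1/2)" using N0 d by (intro divide_left_mono) auto
    finally show ?thesis using cN by simp
  next
    case False
    have K: "K \<le> N * (1 - r) powr (1 - \<alpha>) / (\<alpha> - 1)"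
      using bnd_f2[OF assms(1,2,3)] by (simp add: K_def N_def r_def)
    have sq: "0 \<le> (1 - r)^2" by simp
    have "1 - r^2 \<le> 2 * (1 - r)" using sq by (simp add: power2_eq_square algebra_simps)
    moreover have "0 \<le> 1 - r^2" using \<open>r^2 < 1\<close> by simp
    ultimately have "1 - r^2 \<le> 2 * (1 - r)" "0 \<le> 1 - r^2" by auto
    then have "A \<le> (2 * (1 - r)) powr \<alpha>" unfolding A_def using assms(3) by (intro powr_mono2) auto
    also have "\<dots> = 2 powr \<alpha> * (1 - r) powr \<alpha>" using r1 by (subst powr_mult) auto
    finally have A: "A \<le> 2 powr \<alpha> * (1 - r) powr \<alpha>" .
    have "A * K \<le> (2 powr \<alpha> * (1 - r) powr \<alpha>) * (N * (1 - r) powr (1 - \<alpha>) / (\<alpha> - 1))"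
      using A K A0 K0 by (intro mult_mono) auto
    also have "\<dots> = 2 powr \<alpha> * N / (\<alpha> - 1) * ((1 - r) powr \<alpha> * (1 - r) powr (1 - \<alpha>))" by simp
    also have "(1 - r) powr \<alpha> * (1 - r) powr (1 - \<alpha>) = 1 - r"
      using r1 by (simp add: powr_add[symmetric])
    finally have AK: "A * K \<le> 2 powr \<alpha> * N / (\<alpha> - 1) * (1 - r)" .
    have D1: "(1/2) * (1 - r) \<le> r * (1 - r)" using False r1 by (intro mult_right_mono) auto
    have D2: "r * (1 - r) \<le> r * cmod (1 - z)" using d1 r0 by (intro mult_left_mono) auto
    have D: "(1 - r) / 2 \<le> r * cmod (1 - z)" using D1 D2 by simp
    have "A * (K / (r * cmod (1 - z))) = (A * K) / (r * cmod (1 - z))" by simp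
    also have "\<dots> \<le> (2 powr \<alpha> * N / (\<alpha> - 1) * (1 - r)) / ((1 - r) / 2)"
      using AK D r1 A0 K0 N0 assms(3) by (intro frac_le) auto
    also have "\<dots> = 2 * 2 powr \<alpha> / (\<alpha> - 1) * N" using r1 by simp
    finally show ?thesis using N0 by simp
  qed
  then show ?thesis by (simp add: A_def K_def r_def N_def algebra_simps)
qed

lemma cesaro_props:
  assumes "f \<in> bloch0 \<alpha>"
  defines "g \<equiv> (\<lambda>z. (if z = 0 then deriv f 0 else (f z - f 0) / (z - 0)) / (1 - z))"
  shows "\<And>z. z \<in> ball 0 1 \<Longrightarrow> (cesaro1 f has_field_derivative g z) (at z)"
    and "\<And>z. z \<in> ball 0 1 \<Longrightarrow> ((\<lambda>w. f w / (w * (1 - w))) has_contour_integral cesaro1 f z) (linepath 0 z)"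
proof -
  have hol: "f holomorphic_on ball 0 1" and f0: "f 0 = 0" using holo[OF assms(1)] by auto
  have h: "(\<lambda>z. if z = 0 then deriv f 0 else (f z - f 0) / (z - 0)) holomorphic_on ball 0 1"
    using pole_lemma[OF hol, of 0] by (simp add: interior_open)
  have g: "g holomorphic_on ball 0 1" unfolding g_def
    by (intro holomorphic_intros h) (auto simp: dist_norm)
  obtain G where G: "\<And>x. x \<in> ball 0 1 \<Longrightarrow> (G has_field_derivative g x) (at x within ball 0 1)"
    using holomorphic_convex_primitive'[OF convex_ball open_ball g] by blast
  have HC: "((\<lambda>w. f w / (w * (1 - w))) has_contour_integral (G z - G 0)) (linepath 0 z)"
    if z: "z \<in> ball 0 1" for z
  proof -
    have ps: "path_image (linepath 0 z) \<subseteq> ball 0 1"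
      unfolding path_image_linepath by (rule closed_segment_subset) (use z in auto)
    have "(g has_contour_integral (G (pathfinish (linepath 0 z)) - G (pathstart (linepath 0 z)))) (linepath 0 z)"
      by (rule contour_integral_primitive[OF G valid_path_linepath ps])
    then have "(g has_contour_integral (G z - G 0)) (linepath 0 z)" by simp
    then have I: "((\<lambda>x. g (linepath 0 z x) * (z - 0)) has_integral (G z - G 0)) {0..1}"
      by (simp add: has_contour_integral_linepath)
    have "((\<lambda>x. f (linepath 0 z x) / (linepath 0 z x * (1 - linepath 0 z x)) * (z - 0)) has_integral (G z - G 0)) {0..1}"
    proof (rule has_integral_spike_finite[OF _ _ I, of "{0}"])
      fix x assume x: "x \<in> {0..1} - {0::real}"
      show "f (linepath 0 z x) / (linepath 0 z x * (1 - linepath 0 z x)) * (z - 0) = g (linepath 0 z x) * (z - 0)"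
      proof (cases "z = 0")
        case False
        then have "linepath 0 z x \<noteq> 0" using x by (auto simp: linepath_def scaleR_conv_of_real)
        then show ?thesis by (simp add: g_def f0)
      qed simp
    qed simp
    then show ?thesis by (simp add: has_contour_integral_linepath)
  qed
  have CG: "cesaro1 f z = G z - G 0" if "z \<in> ball 0 1" for z
    unfolding cesaro1_def using HC[OF that] by (rule contour_integral_unique)
  show "((\<lambda>w. f w / (w * (1 - w))) has_contour_integral cesaro1 f z) (linepath 0 z)"
    if "z \<in> ball 0 1" for z using HC[OF that] CG[OF that] by simp
  show "(cesaro1 f has_field_derivative g z) (at z)" if z: "z \<in> ball 0 1" for z
  proof (rule has_field_derivative_transform_within_open[OF _ open_ball z])
    show "((\<lambda>w. G w - G 0) has_field_derivative g z) (at z)"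
    proof -
      have "(G has_field_derivative g z) (at z)" using G[OF z] by (simp add: at_within_open[OF z open_ball])
      from DERIV_diff[OF this DERIV_const[of "G 0" "at z"]] show ?thesis by simp
    qed
    show "G x - G 0 = cesaro1 f x" if "x \<in> ball 0 1" for x using CG[OF that] by simp
  qed
qed

lemma cesaro_bound:
  assumes "f \<in> bloch0 \<alpha>" "\<alpha> > 1" "z \<in> ball 0 1"
  shows "(1 - (cmod z)^2) powr \<alpha> * cmod (deriv (cesaro1 f) z)
          \<le> (2 + 2 * 2 powr \<alpha> / (\<alpha> - 1)) * bloch_norm \<alpha> f"
proof -
  define g where "g \<equiv> (\<lambda>z. (if z = 0 then deriv f 0 else (f z - f 0) / (z - 0)) / (1 - z))"
  have d: "deriv (cesaro1 f) z = g z"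
    using cesaro_props(1)[OF assms(1) assms(3)] by (simp add: g_def DERIV_imp_deriv)
  have N0: "0 \<le> bloch_norm \<alpha> f" by (rule N_nonneg[OF assms(1)])
  have M1: "1 \<le> 2 + 2 * 2 powr \<alpha> / (\<alpha> - 1)" using assms(2) by simp
  show ?thesis
  proof (cases "z = 0")
    case True
    have "cmod (deriv f 0) \<le> bloch_norm \<alpha> f" using bnd_deriv[OF assms(1), of 0] by simp
    also have "\<dots> \<le> (2 + 2 * 2 powr \<alpha> / (\<alpha> - 1)) * bloch_norm \<alpha> f"
      using M1 N0 by (simp add: mult_le_cancel_right1)
    finally show ?thesis using True d by (simp add: g_def)
  next
    case False
    have "g z = f z / (z * (1 - z))" using False holo(2)[OF assms(1)] by (simp add: g_def)
    then have "cmod (g z) = cmod (f z) / (cmod z * cmod (1 - z))" by (simp add: norm_divide norm_mult)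
    then show ?thesis using bnd_main[OF assms(1,3,2) False] d by simp
  qed
qed

theorem corollary2p1:
  fixes \<alpha> :: real
  assumes "\<alpha> > 1"
  shows "(\<forall>f\<in>bloch0 \<alpha>. cesaro1 f \<in> bloch0 \<alpha>)
    \<and> (\<forall>f\<in>bloch0 \<alpha>. \<forall>g\<in>bloch0 \<alpha>. \<forall>c::complex. \<forall>z\<in>ball 0 1.
          cesaro1 (\<lambda>w. c * f w + g w) z = c * cesaro1 f z + cesaro1 g z)
    \<and> (\<exists>M. \<forall>f\<in>bloch0 \<alpha>. bloch_norm \<alpha> (cesaro1 f) \<le> M * bloch_norm \<alpha> f)"
proof (intro conjI ballI allI)
  fix f assume f: "f \<in> bloch0 \<alpha>"
  have hol: "cesaro1 f holomorphic_on ball 0 1"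
    unfolding holomorphic_on_open[OF open_ball] using cesaro_props(1)[OF f] by blast
  have bdd: "bdd_above ((\<lambda>z. (1 - (cmod z)\<^sup>2) powr \<alpha> * cmod (deriv (cesaro1 f) z)) ` ball 0 1)"
    using cesaro_bound[OF f assms] by (intro bdd_aboveI2) auto
  show "cesaro1 f \<in> bloch0 \<alpha>"
    using hol bdd by (simp add: bloch0_def in_bloch_def cesaro1_def)
next
  fix f g c z assume f: "f \<in> bloch0 \<alpha>" and g: "g \<in> bloch0 \<alpha>" and z: "z \<in> ball (0::complex) 1"
  have "((\<lambda>w. c * (f w / (w * (1 - w))) + g w / (w * (1 - w))) has_contour_integral
          (c * cesaro1 f z + cesaro1 g z)) (linepath 0 z)"
    by (intro has_contour_integral_add has_contour_integral_lmul cesaro_props(2)[OF f z] cesaro_props(2)[OF g z])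
  moreover have "(\<lambda>w. c * (f w / (w * (1 - w))) + g w / (w * (1 - w))) = (\<lambda>w. (c * f w + g w) / (w * (1 - w)))"
    by (simp add: add_divide_distrib)
  ultimately show "cesaro1 (\<lambda>w. c * f w + g w) z = c * cesaro1 f z + cesaro1 g z"
    unfolding cesaro1_def by (simp add: contour_integral_unique)
next
  show "\<exists>M. \<forall>f\<in>bloch0 \<alpha>. bloch_norm \<alpha> (cesaro1 f) \<le> M * bloch_norm \<alpha> f"
  proof (intro exI ballI)
    fix f assume f: "f \<in> bloch0 \<alpha>"
    show "bloch_norm \<alpha> (cesaro1 f) \<le> (2 + 2 * 2 powr \<alpha> / (\<alpha> - 1)) * bloch_norm \<alpha> f"
      unfolding bloch_norm_def[of _ "cesaro1 f"]
      using cesaro_bound[OF f assms] by (intro cSUP_least) auto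
  qed
qed

end
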